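(* Let $\Sigma=[-\tfrac12,\tfrac12]^2$ with the sup distance, and for $\gamma\in I=[-\tfrac12,\tfrac12]$ let $\gamma$ also denote the vertical leaf $\{\gamma\}\times I$. Let $\mu^1,\mu^2$ be Borel probability measures on $\Sigma$ such that for each Borel $A\subset\Sigma$ and $i=1,2$, $$\mu^i(A)=\int_{I}\mu^i_\gamma(A\cap\gamma)\,d\mu^i_x(\gamma),$$ where the $\mu^i_\gamma$ are probability measures on the leaves $\gamma$ and $\mu^i_x$ are probability measures on $I$ absolutely continuous with respect to Lebesgue measure. Suppose that (1) for almost every leaf $\gamma$, $W_1(\mu^1_\gamma,\mu^2_\gamma)\le\epsilon$, and (2) $\sup_{\|h\|_\infty\le1}\big|\int h\,d\mu^1_x-\int h\,d\mu^2_x\big|\le\delta$, the supremum over Borel $h:I\to\mathbb{R}$. Then $W_1(\mu^1,\mu^2)\le\epsilon+\delta$.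
   Context: For probability measures $\nu_1,\nu_2$ on a bounded metric space $Y$, $W_1(\nu_1,\nu_2)=\sup\{|\int g\,d\nu_1-\int g\,d\nu_2|: g:Y\to\mathbb{R}\ 1\text{-Lipschitz}\}$; on a leaf $\gamma$ the induced metric is used. *)

theory Defs
  imports "HOL-Probability.Probability"
begin

definition Iv :: "real set" where
  "Iv = {-1/2..1/2}"

definition Sq :: "(real \<times> real) set" where
  "Sq = Iv \<times> Iv"

definition leaf :: "real \<Rightarrow> (real \<times> real) set" where
  "leaf g = {g} \<times> Iv"

definition supdist :: "real \<times> real \<Rightarrow> real \<times> real \<Rightarrow> real" where
  "supdist p q = max \<bar>fst p - fst q\<bar> \<bar>snd p - snd q\<bar>"

text \<open>Wasserstein-1 distance (Kantorovich-Rubinstein dual form) of two measures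
  living on the subset Y with metric d: supremum over all 1-Lipschitz functions
  g : Y -> R of the difference of the integrals over Y.  Valued in ereal so
  that the supremum is meaningful without boundedness assumptions.\<close>
definition W1 :: "('a \<Rightarrow> 'a \<Rightarrow> real) \<Rightarrow> 'a set \<Rightarrow> 'a measure \<Rightarrow> 'a measure \<Rightarrow> ereal" where
  "W1 d Y m1 m2 =
     (SUP g \<in> {g :: 'a \<Rightarrow> real. \<forall>x\<in>Y. \<forall>y\<in>Y. \<bar>g x - g y\<bar> \<le> d x y}.
        ereal \<bar>(LINT x:Y|m1. g x) - (LINT x:Y|m2. g x)\<bar>)"

end

theory Submission
  imports Defs
begin


definition inr :: "(real \<Rightarrow> (real\<times>real) measure) \<Rightarrow> (real\<times>real \<Rightarrow> ennreal) \<Rightarrow> real \<Rightarrow> ennreal" where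
  "inr nu f g = indicator Iv g * (\<integral>\<^sup>+x. f x * indicator (leaf g) x \<partial>nu g)"

lemma leaf_sub: "g \<in> Iv \<Longrightarrow> leaf g \<subseteq> Sq"
  by (auto simp: leaf_def Sq_def)

lemma leaf_borel[measurable]: "leaf g \<in> sets borel"
  by (auto simp: leaf_def Iv_def intro!: borel_closed closed_Times)

lemma Sq_borel[measurable]: "Sq \<in> sets borel"
  by (auto simp: Sq_def Iv_def intro!: borel_closed closed_Times)

lemma Iv_borel[measurable]: "Iv \<in> sets borel"
  by (auto simp: Iv_def)

lemma kernel_nn:
  fixes mu :: "(real\<times>real) measure" and nu :: "real \<Rightarrow> (real\<times>real) measure" and mx :: "real measure"
  assumes smu: "sets mu = sets borel" and smx: "sets mx = sets borel"
    and snu: "\<And>g. g\<in>Iv \<Longrightarrow> sets (nu g) = sets borel"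
    and kernel: "\<And>A. A \<in> sets borel \<Longrightarrow> A \<subseteq> Sq \<Longrightarrow>
        (\<lambda>g. indicator Iv g * emeasure (nu g) (A \<inter> leaf g)) \<in> borel_measurable borel"
    and disint: "\<And>A. A \<in> sets borel \<Longrightarrow> A \<subseteq> Sq \<Longrightarrow>
        emeasure mu A = (\<integral>\<^sup>+ g\<in>Iv. emeasure (nu g) (A \<inter> leaf g) \<partial>mx)"
    and f: "f \<in> borel_measurable borel"
  shows "inr nu f \<in> borel_measurable borel \<and> (\<integral>\<^sup>+x. f x * indicator Sq x \<partial>mu) = (\<integral>\<^sup>+g. inr nu f g \<partial>mx)"
  using f
proof (induction rule: borel_measurable_induct)
  case (cong f g)
  then have "f = g" by auto
  then show ?case using cong by simp
next
  case (set A)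
  have eq: "inr nu (indicator A) g = indicator Iv g * emeasure (nu g) ((A \<inter> Sq) \<inter> leaf g)" for g
  proof (cases "g \<in> Iv")
    case True
    have "(\<integral>\<^sup>+x. indicator A x * indicator (leaf g) x \<partial>nu g) = emeasure (nu g) (A \<inter> leaf g)"
    proof -
      have "(\<integral>\<^sup>+x. indicator A x * indicator (leaf g) x \<partial>nu g) = (\<integral>\<^sup>+x. indicator (A \<inter> leaf g) x \<partial>nu g)"
        by (simp add: indicator_inter_arith del: nn_integral_indicator)
      also have "\<dots> = emeasure (nu g) (A \<inter> leaf g)"
        using set snu[OF True] by (intro nn_integral_indicator) auto
      finally show ?thesis .
    qed
    moreover have "A \<inter> Sq \<inter> leaf g = A \<inter> leaf g" using leaf_sub[OF True] by auto
    ultimately show ?thesis by (simp add: inr_def)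
  qed (simp add: inr_def)
  have m: "inr nu (indicator A) \<in> borel_measurable borel"
    unfolding eq using kernel[of "A \<inter> Sq"] set by auto
  have "(\<integral>\<^sup>+x. indicator A x * indicator Sq x \<partial>mu) = emeasure mu (A \<inter> Sq)"
  proof -
    have "(\<integral>\<^sup>+x. indicator A x * indicator Sq x \<partial>mu) = (\<integral>\<^sup>+x. indicator (A \<inter> Sq) x \<partial>mu)"
      by (simp add: indicator_inter_arith del: nn_integral_indicator)
    also have "\<dots> = emeasure mu (A \<inter> Sq)"
      using set smu by (intro nn_integral_indicator) auto
    finally show ?thesis .
  qed
  also have "\<dots> = (\<integral>\<^sup>+ g\<in>Iv. emeasure (nu g) ((A \<inter> Sq) \<inter> leaf g) \<partial>mx)"
    using disint[of "A \<inter> Sq"] set by auto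
  also have "\<dots> = (\<integral>\<^sup>+g. inr nu (indicator A) g \<partial>mx)"
    unfolding eq by (simp add: mult.commute)
  finally show ?case using m by simp
next
  case (mult u c)
  have eq: "inr nu (\<lambda>x. c * u x) g = c * inr nu u g" for g
  proof (cases "g \<in> Iv")
    case True
    have um: "u \<in> borel_measurable (nu g)" using mult snu[OF True] by (simp cong: measurable_cong_sets)
    have "(\<integral>\<^sup>+x. c * u x * indicator (leaf g) x \<partial>nu g) = c * (\<integral>\<^sup>+x. u x * indicator (leaf g) x \<partial>nu g)"
      using um snu[OF True] by (subst nn_integral_cmult[symmetric]) (auto simp: mult.assoc)
    then show ?thesis by (simp add: inr_def mult.left_commute)
  qed (simp add: inr_def)
  have um: "u \<in> borel_measurable mu" using mult smu by (simp cong: measurable_cong_sets)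
  have im: "inr nu u \<in> borel_measurable mx" using mult smx by (simp cong: measurable_cong_sets)
  have "(\<integral>\<^sup>+x. c * u x * indicator Sq x \<partial>mu) = c * (\<integral>\<^sup>+x. u x * indicator Sq x \<partial>mu)"
    using um smu by (subst nn_integral_cmult[symmetric]) (auto simp: mult.assoc)
  also have "\<dots> = (\<integral>\<^sup>+g. c * inr nu u g \<partial>mx)"
    using mult im by (simp add: nn_integral_cmult)
  finally show ?case unfolding eq using mult by (auto intro!: borel_measurable_times)
next
  case (add u v)
  have eq: "inr nu (\<lambda>x. v x + u x) g = inr nu v g + inr nu u g" for g
  proof (cases "g \<in> Iv")
    case True
    have um: "u \<in> borel_measurable (nu g)" "v \<in> borel_measurable (nu g)"
      using add snu[OF True] by (simp_all cong: measurable_cong_sets)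
    have "(\<integral>\<^sup>+x. (v x + u x) * indicator (leaf g) x \<partial>nu g) = (\<integral>\<^sup>+x. v x * indicator (leaf g) x \<partial>nu g) + (\<integral>\<^sup>+x. u x * indicator (leaf g) x \<partial>nu g)"
      using um snu[OF True] by (subst nn_integral_add[symmetric]) (auto simp: distrib_right)
    then show ?thesis by (simp add: inr_def distrib_left)
  qed (simp add: inr_def)
  have um: "u \<in> borel_measurable mu" "v \<in> borel_measurable mu" using add smu by (simp_all cong: measurable_cong_sets)
  have im: "inr nu u \<in> borel_measurable mx" "inr nu v \<in> borel_measurable mx"
    using add smx by (simp_all cong: measurable_cong_sets)
  have "(\<integral>\<^sup>+x. (v x + u x) * indicator Sq x \<partial>mu) = (\<integral>\<^sup>+x. v x * indicator Sq x \<partial>mu) + (\<integral>\<^sup>+x. u x * indicator Sq x \<partial>mu)"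
    using um smu by (subst nn_integral_add[symmetric]) (auto simp: distrib_right)
  also have "\<dots> = (\<integral>\<^sup>+g. inr nu v g + inr nu u g \<partial>mx)"
    using add im by (simp add: nn_integral_add)
  finally show ?case unfolding eq using add by (auto intro!: borel_measurable_add)
next
  case (seq U)
  have eq: "inr nu (SUP i. U i) g = (SUP i. inr nu (U i) g)" for g
  proof (cases "g \<in> Iv")
    case True
    have um: "\<And>i. (\<lambda>x. U i x * indicator (leaf g) x) \<in> borel_measurable (nu g)"
      using seq snu[OF True] by (simp cong: measurable_cong_sets)
    have inc: "incseq (\<lambda>i x. U i x * indicator (leaf g) x)"
      using \<open>incseq U\<close> unfolding incseq_def le_fun_def by (auto intro!: mult_right_mono)
    have "(\<integral>\<^sup>+x. (SUP i. U i) x * indicator (leaf g) x \<partial>nu g) = (\<integral>\<^sup>+x. (SUP i. U i x * indicator (leaf g) x) \<partial>nu g)"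
      by (simp only: SUP_apply SUP_mult_right_ennreal)
    also have "\<dots> = (SUP i. \<integral>\<^sup>+x. U i x * indicator (leaf g) x \<partial>nu g)"
      by (rule nn_integral_monotone_convergence_SUP[OF inc um])
    finally show ?thesis by (simp add: inr_def SUP_mult_left_ennreal)
  qed (simp add: inr_def)
  have m: "inr nu (SUP i. U i) \<in> borel_measurable borel"
    unfolding eq using seq by (auto intro!: borel_measurable_SUP)
  have um: "\<And>i. (\<lambda>x. U i x * indicator Sq x) \<in> borel_measurable mu"
    using seq smu by (simp cong: measurable_cong_sets)
  have inc: "incseq (\<lambda>i x. U i x * indicator Sq x)"
    using \<open>incseq U\<close> unfolding incseq_def le_fun_def by (auto intro!: mult_right_mono)
  have im: "\<And>i. inr nu (U i) \<in> borel_measurable mx"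
    using seq smx by (simp cong: measurable_cong_sets)
  have inc2: "incseq (\<lambda>i. inr nu (U i))"
  proof (rule incseq_SucI, rule le_funI)
    fix i g
    show "inr nu (U i) g \<le> inr nu (U (Suc i)) g"
      unfolding inr_def using \<open>incseq U\<close>
      by (auto intro!: mult_left_mono nn_integral_mono mult_right_mono simp: incseq_def le_fun_def)
  qed
  have "(\<integral>\<^sup>+x. (SUP i. U i) x * indicator Sq x \<partial>mu) = (\<integral>\<^sup>+x. (SUP i. U i x * indicator Sq x) \<partial>mu)"
    by (simp only: SUP_apply SUP_mult_right_ennreal)
  also have "\<dots> = (SUP i. \<integral>\<^sup>+x. U i x * indicator Sq x \<partial>mu)"
    by (rule nn_integral_monotone_convergence_SUP[OF inc um])
  also have "\<dots> = (SUP i. \<integral>\<^sup>+g. inr nu (U i) g \<partial>mx)"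
    using seq by simp
  also have "\<dots> = (\<integral>\<^sup>+g. (SUP i. inr nu (U i) g) \<partial>mx)"
    by (rule nn_integral_monotone_convergence_SUP[OF inc2 im, symmetric])
  finally have fin: "(\<integral>\<^sup>+x. (SUP i. U i) x * indicator Sq x \<partial>mu) = (\<integral>\<^sup>+g. (SUP i. inr nu (U i) g) \<partial>mx)" .
  show ?case
  proof (rule conjI)
    show "inr nu (SUP i. U i) \<in> borel_measurable borel" by (rule m)
    show "(\<integral>\<^sup>+x. (SUP i. U i) x * indicator Sq x \<partial>mu) = (\<integral>\<^sup>+g. inr nu (SUP i. U i) g \<partial>mx)"
      by (simp only: eq fin)
  qed
qed


lemma bnd_int:
  fixes h :: "'a::topological_space \<Rightarrow> real"
  assumes "finite_measure M" "sets M = sets borel" "h \<in> borel_measurable borel" "\<And>x. 0 \<le> h x" "\<And>x. h x \<le> 1"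
  shows "integrable M h" "(\<integral>\<^sup>+x. ennreal (h x) \<partial>M) = ennreal (integral\<^sup>L M h)"
proof -
  have hm: "h \<in> borel_measurable M" using assms(2,3) by (simp cong: measurable_cong_sets)
  show i: "integrable M h"
    using assms(4,5) hm by (intro finite_measure.integrable_const_bound[OF assms(1), where B=1]) auto
  show "(\<integral>\<^sup>+x. ennreal (h x) \<partial>M) = ennreal (integral\<^sup>L M h)"
    using i assms(4) by (intro nn_integral_eq_integral) auto
qed

lemma supdist_le_dist: "supdist x y \<le> dist x y"
  by (cases x, cases y) (simp add: supdist_def dist_Pair_Pair dist_real_def real_sqrt_sum_squares_ge1 real_sqrt_sum_squares_ge2)

lemma lip_cont:
  assumes "\<forall>x\<in>S. \<forall>y\<in>S. \<bar>g x - g y\<bar> \<le> supdist x y"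
  shows "continuous_on S g"
  unfolding continuous_on_iff
proof (intro ballI allI impI)
  fix x e assume x: "x \<in> S" and e: "(0::real) < e"
  show "\<exists>d>0. \<forall>x'\<in>S. dist x' x < d \<longrightarrow> dist (g x') (g x) < e"
  proof (intro exI[of _ e] conjI ballI impI)
    fix x' assume "x' \<in> S" "dist x' x < e"
    then show "dist (g x') (g x) < e"
      using assms x supdist_le_dist[of x' x] by (force simp: dist_real_def)
  qed (rule e)
qed

lemma disint_real:
  fixes mu :: "(real\<times>real) measure" and nu :: "real \<Rightarrow> (real\<times>real) measure" and mx :: "real measure" and f :: "real\<times>real \<Rightarrow> real"
  assumes pmu: "prob_space mu" and smu: "sets mu = sets borel" and pmx: "prob_space mx" and smx: "sets mx = sets borel"
    and snu: "\<And>g. g\<in>Iv \<Longrightarrow> prob_space (nu g) \<and> sets (nu g) = sets borel"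
    and kernel: "\<And>A. A \<in> sets borel \<Longrightarrow> A \<subseteq> Sq \<Longrightarrow>
        (\<lambda>g. indicator Iv g * emeasure (nu g) (A \<inter> leaf g)) \<in> borel_measurable borel"
    and disint: "\<And>A. A \<in> sets borel \<Longrightarrow> A \<subseteq> Sq \<Longrightarrow>
        emeasure mu A = (\<integral>\<^sup>+ g\<in>Iv. emeasure (nu g) (A \<inter> leaf g) \<partial>mx)"
    and fc: "continuous_on Sq f" and f01: "\<And>x. x \<in> Sq \<Longrightarrow> 0 \<le> f x \<and> f x \<le> 1"
  defines "Fr \<equiv> \<lambda>g. indicator Iv g * (LINT x:leaf g|nu g. f x)"
  shows "(LINT x:Sq|mu. f x) = integral\<^sup>L mx Fr" "Fr \<in> borel_measurable borel" "\<And>g. 0 \<le> Fr g \<and> Fr g \<le> 1"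
proof -
  define f' where "f' = (\<lambda>x. indicator Sq x * f x)"
  have f'm: "f' \<in> borel_measurable borel"
    using borel_measurable_continuous_on_indicator[OF Sq_borel fc] by (simp add: f'_def)
  have f'01: "0 \<le> f' x \<and> f' x \<le> 1" for x using f01[of x] by (auto simp: f'_def indicator_def)
  define fe where "fe = (\<lambda>x. ennreal (f' x))"
  have fem: "fe \<in> borel_measurable borel" using f'm by (simp add: fe_def)
  have snu': "\<And>g. g\<in>Iv \<Longrightarrow> sets (nu g) = sets borel" using snu by blast
  note KK = kernel_nn[OF smu smx snu' kernel disint fem]
  note K = conjunct1[OF KK] conjunct2[OF KK]
  have inreq: "inr nu fe g = ennreal (Fr g)" for g
  proof (cases "g \<in> Iv")
    case True
    have pn: "prob_space (nu g)" "sets (nu g) = sets borel" using snu[OF True] by auto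
    have "(\<lambda>x. fe x * indicator (leaf g) x) = (\<lambda>x. ennreal (indicator (leaf g) x * f' x))"
      by (auto simp: fe_def indicator_def)
    moreover have "(\<lambda>x. indicator (leaf g) x * f' x) = (\<lambda>x. indicator (leaf g) x *\<^sub>R f x)"
      using leaf_sub[OF True] by (auto simp: f'_def indicator_def intro!: ext)
    moreover have "(\<integral>\<^sup>+x. ennreal (indicator (leaf g) x * f' x) \<partial>nu g) = ennreal (integral\<^sup>L (nu g) (\<lambda>x. indicator (leaf g) x * f' x))"
      using f'01 f'm pn by (intro bnd_int(2)) (auto simp: prob_space.finite_measure indicator_def)
    ultimately show ?thesis using True by (simp add: inr_def Fr_def set_lebesgue_integral_def)
  qed (simp add: inr_def Fr_def)
  have Fr01: "0 \<le> Fr g \<and> Fr g \<le> 1" for g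
  proof (cases "g \<in> Iv")
    case True
    have pn: "prob_space (nu g)" "sets (nu g) = sets borel" using snu[OF True] by auto
    have eq: "(LINT x:leaf g|nu g. f x) = integral\<^sup>L (nu g) (\<lambda>x. indicator (leaf g) x * f' x)"
      using leaf_sub[OF True] unfolding set_lebesgue_integral_def
      by (intro Bochner_Integration.integral_cong) (auto simp: f'_def indicator_def)
    have hm: "(\<lambda>x. indicator (leaf g) x * f' x) \<in> borel_measurable borel" using f'm by simp
    have h01: "0 \<le> indicator (leaf g) x * f' x \<and> indicator (leaf g) x * f' x \<le> 1" for x
      using f'01[of x] by (auto simp: indicator_def)
    have int: "integrable (nu g) (\<lambda>x. indicator (leaf g) x * f' x)"
      using h01 hm pn by (intro bnd_int(1)) (auto simp: prob_space.finite_measure)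
    have "integral\<^sup>L (nu g) (\<lambda>x. indicator (leaf g) x * f' x) \<le> integral\<^sup>L (nu g) (\<lambda>x. 1)"
      using int h01 pn by (intro integral_mono) (auto simp: prob_space.finite_measure finite_measure.integrable_const)
    also have "\<dots> = 1" using pn by (simp add: prob_space.prob_space)
    finally show ?thesis using True eq h01 by (simp add: Fr_def)
  qed (simp add: Fr_def)
  have Fre: "Fr = (\<lambda>g. enn2real (inr nu fe g))" by (rule ext) (simp only: inreq enn2real_ennreal Fr01)
  show Frm: "Fr \<in> borel_measurable borel" unfolding Fre using K(1) by (rule borel_measurable_enn2real)
  show "\<And>g. 0 \<le> Fr g \<and> Fr g \<le> 1" by (rule Fr01)
  have "(\<integral>\<^sup>+x. fe x * indicator Sq x \<partial>mu) = (\<integral>\<^sup>+x. ennreal (f' x) \<partial>mu)"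
    by (intro nn_integral_cong) (auto simp: fe_def f'_def indicator_def)
  also have "\<dots> = ennreal (integral\<^sup>L mu f')"
    using f'01 f'm pmu smu by (intro bnd_int(2)) (auto simp: prob_space.finite_measure)
  finally have l: "(\<integral>\<^sup>+x. fe x * indicator Sq x \<partial>mu) = ennreal (LINT x:Sq|mu. f x)"
    by (simp add: f'_def set_lebesgue_integral_def)
  have r: "(\<integral>\<^sup>+g. inr nu fe g \<partial>mx) = ennreal (integral\<^sup>L mx Fr)"
    unfolding inreq using Fr01 Frm pmx smx by (intro bnd_int(2)) (auto simp: prob_space.finite_measure)
  have "ennreal (LINT x:Sq|mu. f x) = ennreal (integral\<^sup>L mx Fr)" using K(2) l r by metis
  moreover have "0 \<le> (LINT x:Sq|mu. f x)"
    unfolding set_lebesgue_integral_def using f01 by (intro Bochner_Integration.integral_nonneg) (auto simp: indicator_def)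
  moreover have "0 \<le> integral\<^sup>L mx Fr" using Fr01 by (intro Bochner_Integration.integral_nonneg) auto
  ultimately show "(LINT x:Sq|mu. f x) = integral\<^sup>L mx Fr" by simp
qed


lemma shift:
  fixes M :: "(real\<times>real) measure" and g :: "real\<times>real \<Rightarrow> real"
  assumes pM: "prob_space M" and sM: "sets M = sets borel" and eM: "emeasure M Sq = 1"
    and gc: "continuous_on Sq g" and gb: "\<And>x. x \<in> Sq \<Longrightarrow> \<bar>g x - c\<bar> \<le> 1/2"
  shows "(LINT x:Sq|M. g x) = (LINT x:Sq|M. g x - c + 1/2) + (c - 1/2)"
proof -
  interpret prob_space M by (rule pM)
  have gm: "(\<lambda>x. indicator Sq x *\<^sub>R g x) \<in> borel_measurable M"
    using borel_measurable_continuous_on_indicator[OF Sq_borel gc] sM by (simp cong: measurable_cong_sets del: real_scaleR_def)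
  have "\<bar>indicator Sq x *\<^sub>R g x\<bar> \<le> \<bar>c\<bar> + 1/2" for x
    using gb[of x] by (auto simp: indicator_def abs_if split: if_splits)
  then have gi: "integrable M (\<lambda>x. indicator Sq x *\<^sub>R g x)"
    using gm by (intro integrable_const_bound[where B="\<bar>c\<bar> + 1/2"]) auto
  have Si: "integrable M (\<lambda>x. (c - 1/2) * indicator Sq x)"
    using sM eM by (intro integrable_mult_right integrable_real_indicator) auto
  have mS: "measure M Sq = 1" using eM by (simp add: measure_def)
  have "(LINT x:Sq|M. g x - c + 1/2) = integral\<^sup>L M (\<lambda>x. indicator Sq x *\<^sub>R g x - (c - 1/2) * indicator Sq x)"
    unfolding set_lebesgue_integral_def
    by (intro Bochner_Integration.integral_cong) (auto simp: indicator_def)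
  also have "\<dots> = integral\<^sup>L M (\<lambda>x. indicator Sq x *\<^sub>R g x) - integral\<^sup>L M (\<lambda>x. (c - 1/2) * indicator Sq x)"
    by (rule Bochner_Integration.integral_diff[OF gi Si])
  also have "integral\<^sup>L M (\<lambda>x. (c - 1/2) * indicator Sq x) = (c - 1/2)"
    using sM eM mS by simp
  finally show ?thesis by (simp add: set_lebesgue_integral_def)
qed

theorem proposition4p6:
  fixes mu1 mu2 :: "(real \<times> real) measure"
    and nu1 nu2 :: "real \<Rightarrow> (real \<times> real) measure"
    and mx1 mx2 :: "real measure"
    and \<epsilon> \<delta> :: real
  assumes mu1: "prob_space mu1" "sets mu1 = sets borel" "emeasure mu1 Sq = 1"
    and mu2: "prob_space mu2" "sets mu2 = sets borel" "emeasure mu2 Sq = 1"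
    and nu1: "\<And>g. g \<in> Iv \<Longrightarrow> prob_space (nu1 g) \<and> sets (nu1 g) = sets borel \<and> emeasure (nu1 g) (leaf g) = 1"
    and nu2: "\<And>g. g \<in> Iv \<Longrightarrow> prob_space (nu2 g) \<and> sets (nu2 g) = sets borel \<and> emeasure (nu2 g) (leaf g) = 1"
    and mx1: "prob_space mx1" "sets mx1 = sets borel" "emeasure mx1 Iv = 1" "absolutely_continuous lborel mx1"
    and mx2: "prob_space mx2" "sets mx2 = sets borel" "emeasure mx2 Iv = 1" "absolutely_continuous lborel mx2"
    and kernel1: "\<And>A. A \<in> sets borel \<Longrightarrow> A \<subseteq> Sq \<Longrightarrow>
        (\<lambda>g. indicator Iv g * emeasure (nu1 g) (A \<inter> leaf g)) \<in> borel_measurable borel"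
    and kernel2: "\<And>A. A \<in> sets borel \<Longrightarrow> A \<subseteq> Sq \<Longrightarrow>
        (\<lambda>g. indicator Iv g * emeasure (nu2 g) (A \<inter> leaf g)) \<in> borel_measurable borel"
    and disint1: "\<And>A. A \<in> sets borel \<Longrightarrow> A \<subseteq> Sq \<Longrightarrow>
        emeasure mu1 A = (\<integral>\<^sup>+ g\<in>Iv. emeasure (nu1 g) (A \<inter> leaf g) \<partial>mx1)"
    and disint2: "\<And>A. A \<in> sets borel \<Longrightarrow> A \<subseteq> Sq \<Longrightarrow>
        emeasure mu2 A = (\<integral>\<^sup>+ g\<in>Iv. emeasure (nu2 g) (A \<inter> leaf g) \<partial>mx2)"
    and leaves: "AE g in lborel. g \<in> Iv \<longrightarrow> W1 supdist (leaf g) (nu1 g) (nu2 g) \<le> ereal \<epsilon>"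
    and transverse: "\<And>h. h \<in> borel_measurable borel \<Longrightarrow> (\<forall>x\<in>Iv. \<bar>h x\<bar> \<le> 1) \<Longrightarrow>
        \<bar>(LINT x:Iv|mx1. h x) - (LINT x:Iv|mx2. h x)\<bar> \<le> \<delta>"
  shows "W1 supdist Sq mu1 mu2 \<le> ereal (\<epsilon> + \<delta>)"
proof -
  have d0: "0 \<le> \<delta>" using transverse[of "\<lambda>_. 0"] by simp
  have snu1: "\<And>g. g\<in>Iv \<Longrightarrow> prob_space (nu1 g) \<and> sets (nu1 g) = sets borel" using nu1 by blast
  have snu2: "\<And>g. g\<in>Iv \<Longrightarrow> prob_space (nu2 g) \<and> sets (nu2 g) = sets borel" using nu2 by blast
  show ?thesis unfolding W1_def
  proof (rule SUP_least)
    fix g assume "g \<in> {g. \<forall>x\<in>Sq. \<forall>y\<in>Sq. \<bar>g x - g y\<bar> \<le> supdist x y}"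
    then have lip: "\<forall>x\<in>Sq. \<forall>y\<in>Sq. \<bar>g x - g y\<bar> \<le> supdist x y" by simp
    define c where "c = g (0,0)"
    define f where "f = (\<lambda>x. g x - c + 1/2)"
    have O: "(0::real,0::real) \<in> Sq" by (simp add: Sq_def Iv_def)
    have gb: "\<bar>g x - c\<bar> \<le> 1/2" if x: "x \<in> Sq" for x
    proof -
      have "\<bar>g x - c\<bar> \<le> supdist x (0,0)" using lip x O unfolding c_def by blast
      also have "\<dots> \<le> 1/2" using x by (cases x) (auto simp: supdist_def Sq_def Iv_def)
      finally show ?thesis .
    qed
    have f01: "0 \<le> f x \<and> f x \<le> 1" if "x \<in> Sq" for x
      using gb[OF that] abs_le_iff[of "g x - c" "1/2"] unfolding f_def by linarith
    have flip: "\<forall>x\<in>Sq. \<forall>y\<in>Sq. \<bar>f x - f y\<bar> \<le> supdist x y" using lip by (simp add: f_def)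
    have gc: "continuous_on Sq g" by (rule lip_cont[OF lip])
    have fc: "continuous_on Sq f" by (rule lip_cont[OF flip])
    have sh1: "(LINT x:Sq|mu1. g x) = (LINT x:Sq|mu1. f x) + (c - 1/2)"
      unfolding f_def by (rule shift[OF mu1 gc gb])
    have sh2: "(LINT x:Sq|mu2. g x) = (LINT x:Sq|mu2. f x) + (c - 1/2)"
      unfolding f_def by (rule shift[OF mu2 gc gb])
    define Fr1 where "Fr1 = (\<lambda>g. indicator Iv g * (LINT x:leaf g|nu1 g. f x))"
    define Fr2 where "Fr2 = (\<lambda>g. indicator Iv g * (LINT x:leaf g|nu2 g. f x))"
    note D1 = disint_real[OF mu1(1,2) mx1(1,2) snu1 kernel1 disint1 fc f01, folded Fr1_def]
    note D2 = disint_real[OF mu2(1,2) mx2(1,2) snu2 kernel2 disint2 fc f01, folded Fr2_def]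
    have B1: "0 \<le> Fr1 x \<and> Fr1 x \<le> 1" for x using D1(3)[of x] unfolding Fr1_def by assumption
    have B2: "0 \<le> Fr2 x \<and> Fr2 x \<le> 1" for x using D2(3)[of x] unfolding Fr2_def by assumption
    have fm1: "finite_measure mx1" "finite_measure mx2"
      by (rule prob_space.finite_measure[OF mx1(1)], rule prob_space.finite_measure[OF mx2(1)])
    have i11: "integrable mx1 Fr1" using bnd_int(1)[OF fm1(1) mx1(2) D1(2)] B1 by blast
    have i12: "integrable mx1 Fr2" using bnd_int(1)[OF fm1(1) mx1(2) D2(2)] B2 by blast
    have i22: "integrable mx2 Fr2" using bnd_int(1)[OF fm1(2) mx2(2) D2(2)] B2 by blast
    have mI1: "measure mx1 Iv = 1" using mx1(3) by (simp add: measure_def)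
    have mI2: "measure mx2 Iv = 1" using mx2(3) by (simp add: measure_def)
    have sl: "sets lborel = sets mx1" using mx1(2) by simp
    have AE1: "AE \<gamma> in mx1. \<gamma> \<in> Iv \<longrightarrow> W1 supdist (leaf \<gamma>) (nu1 \<gamma>) (nu2 \<gamma>) \<le> ereal \<epsilon>"
      by (rule absolutely_continuous_AE[OF sl[symmetric] mx1(4) leaves])
    have AE2: "AE \<gamma> in mx1. \<bar>Fr1 \<gamma> - Fr2 \<gamma>\<bar> \<le> \<epsilon> * indicator Iv \<gamma>"
      using AE1
    proof eventually_elim
      case (elim \<gamma>)
      show ?case
      proof (cases "\<gamma> \<in> Iv")
        case True
        have "f \<in> {g. \<forall>x\<in>leaf \<gamma>. \<forall>y\<in>leaf \<gamma>. \<bar>g x - g y\<bar> \<le> supdist x y}"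
          using flip leaf_sub[OF True] by blast
        then have "ereal \<bar>(LINT x:leaf \<gamma>|nu1 \<gamma>. f x) - (LINT x:leaf \<gamma>|nu2 \<gamma>. f x)\<bar> \<le> W1 supdist (leaf \<gamma>) (nu1 \<gamma>) (nu2 \<gamma>)"
          unfolding W1_def by (rule SUP_upper)
        also have "\<dots> \<le> ereal \<epsilon>" using elim True by simp
        finally show ?thesis using True by (simp add: Fr1_def Fr2_def)
      qed (simp add: Fr1_def Fr2_def)
    qed
    have iI: "integrable mx1 (\<lambda>\<gamma>. \<epsilon> * indicator Iv \<gamma>)"
      using mx1 by (intro integrable_mult_right integrable_real_indicator) auto
    have L1: "\<bar>integral\<^sup>L mx1 Fr1 - integral\<^sup>L mx1 Fr2\<bar> \<le> \<epsilon>"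
    proof -
      have "integral\<^sup>L mx1 Fr1 - integral\<^sup>L mx1 Fr2 = integral\<^sup>L mx1 (\<lambda>\<gamma>. Fr1 \<gamma> - Fr2 \<gamma>)"
        by (rule Bochner_Integration.integral_diff[OF i11 i12, symmetric])
      also have "\<bar>\<dots>\<bar> \<le> integral\<^sup>L mx1 (\<lambda>\<gamma>. \<bar>Fr1 \<gamma> - Fr2 \<gamma>\<bar>)"
        by (rule integral_abs_bound)
      also have "\<dots> \<le> integral\<^sup>L mx1 (\<lambda>\<gamma>. \<epsilon> * indicator Iv \<gamma>)"
        using AE2 i11 i12 iI by (intro integral_mono_AE) auto
      also have "\<dots> = \<epsilon>" using mx1 mI1 by simp
      finally show ?thesis .
    qed
    define h where "h = (\<lambda>\<gamma>. 2 * Fr2 \<gamma> - 1)"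
    have hm: "h \<in> borel_measurable borel" unfolding h_def
      by (rule borel_measurable_diff[OF borel_measurable_times[OF borel_measurable_const D2(2)] borel_measurable_const])
    have hb: "\<forall>x\<in>Iv. \<bar>h x\<bar> \<le> 1" using B2 unfolding h_def by (force simp: abs_le_iff)
    have Fr2I: "Fr2 x = indicator Iv x * Fr2 x" for x by (simp add: Fr2_def indicator_def)
    have hint: "(LINT x:Iv|M. h x) = 2 * integral\<^sup>L M Fr2 - 1"
      if M: "prob_space M" "sets M = sets borel" "emeasure M Iv = 1" "integrable M Fr2" for M
    proof -
      have mI: "measure M Iv = 1" using M(3) by (simp add: measure_def)
      have iI': "integrable M (indicator Iv :: real \<Rightarrow> real)"
        using M by (intro integrable_real_indicator) auto
      have "(LINT x:Iv|M. h x) = integral\<^sup>L M (\<lambda>x. 2 * Fr2 x - indicator Iv x)"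
        unfolding set_lebesgue_integral_def h_def
        by (intro Bochner_Integration.integral_cong refl) (subst (2) Fr2I, simp add: indicator_def)
      also have "\<dots> = integral\<^sup>L M (\<lambda>x. 2 * Fr2 x) - integral\<^sup>L M (indicator Iv)"
        using M(4) iI' by (intro Bochner_Integration.integral_diff) auto
      also have "\<dots> = 2 * integral\<^sup>L M Fr2 - 1" using M mI by simp
      finally show ?thesis .
    qed
    have L2: "\<bar>integral\<^sup>L mx1 Fr2 - integral\<^sup>L mx2 Fr2\<bar> \<le> \<delta>"
    proof -
      have "\<bar>(2 * integral\<^sup>L mx1 Fr2 - 1) - (2 * integral\<^sup>L mx2 Fr2 - 1)\<bar> \<le> \<delta>"
        using transverse[OF hm hb] hint[OF mx1(1-3) i12] hint[OF mx2(1-3) i22] by simp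
      then show ?thesis using d0 by (simp add: abs_le_iff)
    qed
    have eq: "(LINT x:Sq|mu1. g x) - (LINT x:Sq|mu2. g x) =
          (integral\<^sup>L mx1 Fr1 - integral\<^sup>L mx1 Fr2) + (integral\<^sup>L mx1 Fr2 - integral\<^sup>L mx2 Fr2)"
      using sh1 sh2 D1(1) D2(1) by linarith
    have "\<bar>(LINT x:Sq|mu1. g x) - (LINT x:Sq|mu2. g x)\<bar> \<le>
          \<bar>integral\<^sup>L mx1 Fr1 - integral\<^sup>L mx1 Fr2\<bar> + \<bar>integral\<^sup>L mx1 Fr2 - integral\<^sup>L mx2 Fr2\<bar>"
      unfolding eq by (rule abs_triangle_ineq)
    then have "\<bar>(LINT x:Sq|mu1. g x) - (LINT x:Sq|mu2. g x)\<bar> \<le> \<epsilon> + \<delta>"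
      using L1 L2 by linarith
    then show "ereal \<bar>(LINT x:Sq|mu1. g x) - (LINT x:Sq|mu2. g x)\<bar> \<le> ereal (\<epsilon> + \<delta>)"
      by (simp only: ereal_less_eq)
  qed
qed


end
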